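(* Let $q\ge 2$ and $n\ge 1$ be integers, $N=\{1,\dots,n\}$, $F^c=\{-\tfrac{q-1}{2},-\tfrac{q-3}{2},\dots,\tfrac{q-3}{2},\tfrac{q-1}{2}\}$ and $\Omega=(F^c)^N$. For each subset $A\subset N$ with $|A|\ge 2$ let $J_A\ge 0$ be given, and define $H_\gamma=-\sum_{A}J_A\,\delta_{(\sigma^A)_\gamma}$, where for $A=\{i_1,\dots,i_k\}$, $\delta_{(\sigma^A)_\gamma}=1$ if $(\sigma_{i_1})_\gamma=\dots=(\sigma_{i_k})_\gamma$ and $0$ otherwise. Let $Z_\gamma=\exp(-H_\gamma)=\prod_A x_A^{\delta_{(\sigma^A)_\gamma}}$ with $x_A=e^{J_A}$, $Z=\sum_{\gamma\in\Omega}Z_\gamma$ and $P(\gamma)=Z_\gamma/Z$. For a finite list $R$ of elements of $N$ (repetitions allowed) set $\sigma^R=\prod_{i\in R}\sigma_i$ (product over the list with multiplicity, $\sigma^\emptyset\equiv1$), where $\sigma_i(\gamma)=(\sigma_i)_\gamma$ is the $i$-th coordinate of $\gamma$. Then for every such list $R$, $$\langle\sigma^R\rangle=\sum_{\gamma\in\Omega}(\sigma^R)_\gamma P(\gamma)\ \ge 0.$$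
   Context: This is a generalized ferromagnetic $q$-state Potts model with multi-spin interactions, with spin values taken in the centered set $F^c$ (equivalently, $\sigma_i$ is the Potts spin in $\{1,\dots,q\}$ minus $(q+1)/2$); the inverse temperature is set to $1$. The paper formally also permits $J_A=+\infty$. *)

theory Defs
  imports Complex_Main "HOL-Library.FuncSet"
begin

definition Fc :: "nat \<Rightarrow> real set" where
  "Fc q = {real k - (real q + 1) / 2 | k. k \<in> {1..q}}"

definition Omega :: "nat \<Rightarrow> nat \<Rightarrow> (nat \<Rightarrow> real) set" where
  "Omega q n = PiE {1..n} (\<lambda>_. Fc q)"

definition interactions :: "nat \<Rightarrow> nat set set" where
  "interactions n = {A. A \<subseteq> {1..n} \<and> card A \<ge> 2}"

definition delta :: "nat set \<Rightarrow> (nat \<Rightarrow> real) \<Rightarrow> real" where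
  "delta A \<gamma> = (if \<forall>i\<in>A. \<forall>j\<in>A. \<gamma> i = \<gamma> j then 1 else 0)"

definition hamiltonian :: "nat \<Rightarrow> (nat set \<Rightarrow> real) \<Rightarrow> (nat \<Rightarrow> real) \<Rightarrow> real" where
  "hamiltonian n J \<gamma> = - (\<Sum>A\<in>interactions n. J A * delta A \<gamma>)"

definition weight :: "nat \<Rightarrow> (nat set \<Rightarrow> real) \<Rightarrow> (nat \<Rightarrow> real) \<Rightarrow> real" where
  "weight n J \<gamma> = exp (- hamiltonian n J \<gamma>)"

definition partition_fn :: "nat \<Rightarrow> nat \<Rightarrow> (nat set \<Rightarrow> real) \<Rightarrow> real" where
  "partition_fn q n J = (\<Sum>\<gamma>\<in>Omega q n. weight n J \<gamma>)"

definition prob :: "nat \<Rightarrow> nat \<Rightarrow> (nat set \<Rightarrow> real) \<Rightarrow> (nat \<Rightarrow> real) \<Rightarrow> real" where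
  "prob q n J \<gamma> = weight n J \<gamma> / partition_fn q n J"

definition spin_prod :: "nat list \<Rightarrow> (nat \<Rightarrow> real) \<Rightarrow> real" where
  "spin_prod R \<gamma> = prod_list (map \<gamma> R)"

definition expect :: "nat \<Rightarrow> nat \<Rightarrow> (nat set \<Rightarrow> real) \<Rightarrow> nat list \<Rightarrow> real" where
  "expect q n J R = (\<Sum>\<gamma>\<in>Omega q n. spin_prod R \<gamma> * prob q n J \<gamma>)"

end

theory Submission
  imports Defs
begin

definition CE :: "(nat \<times> nat) set \<Rightarrow> (nat \<Rightarrow> real) \<Rightarrow> real" where
  "CE E \<gamma> = (if \<forall>(i,j)\<in>E. \<gamma> i = \<gamma> j then 1 else 0)"

lemma finite_Fc: "finite (Fc q)"
proof -
  have "Fc q = (\<lambda>k. real k - (real q + 1) / 2) ` {1..q}" by (auto simp: Fc_def)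
  thus ?thesis by simp
qed

lemma uminus_Fc: "uminus ` Fc q = Fc q"
proof -
  have a: "- x \<in> Fc q" if "x \<in> Fc q" for x
  proof -
    from that obtain k where k: "k \<in> {1..q}" "x = real k - (real q + 1) / 2" by (auto simp: Fc_def)
    have "q + 1 - k \<in> {1..q}" using k by auto
    moreover have "- x = real (q + 1 - k) - (real q + 1) / 2" using k by (auto simp: of_nat_diff)
    ultimately show ?thesis unfolding Fc_def by blast
  qed
  show ?thesis
  proof
    show "uminus ` Fc q \<subseteq> Fc q" using a by auto
    show "Fc q \<subseteq> uminus ` Fc q"
    proof
      fix x assume "x \<in> Fc q"
      hence "-x \<in> Fc q" by (rule a)
      thus "x \<in> uminus ` Fc q" by (intro image_eqI[of _ _ "-x"]) auto
    qed
  qed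
qed

lemma sum_pow_Fc_nonneg: "0 \<le> (\<Sum>x\<in>Fc q. x ^ k)"
proof (cases "even k")
  case True
  then show ?thesis by (intro sum_nonneg) (simp add: zero_le_even_power)
next
  case False
  have "(\<Sum>x\<in>Fc q. x ^ k) = (\<Sum>x\<in>uminus ` Fc q. x ^ k)" by (simp add: uminus_Fc)
  also have "\<dots> = (\<Sum>x\<in>Fc q. (- x) ^ k)"
    by (subst sum.reindex) (auto simp: inj_on_def)
  also have "\<dots> = - (\<Sum>x\<in>Fc q. x ^ k)" using False by (simp add: sum_negf)
  finally show ?thesis by simp
qed

lemma prod_list_upd:
  fixes \<gamma> :: "nat \<Rightarrow> real"
  shows "prod_list (map (\<gamma>(v:=x)) R) = prod_list (map \<gamma> (filter (\<lambda>a. a \<noteq> v) R)) * x ^ count_list R v"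
  proof (induction R)
  case (Cons a R)
  show ?case
  proof (cases "a = v")
    case True
    let ?P = "prod_list (map \<gamma> (filter (\<lambda>a. a \<noteq> v) R))" and ?X = "x ^ count_list R v"
    have "prod_list (map (\<gamma>(v:=x)) (a#R)) = x * prod_list (map (\<gamma>(v:=x)) R)" using True by simp
    also have "\<dots> = x * (?P * ?X)" using Cons.IH by (simp only:)
    also have "\<dots> = ?P * (x * ?X)" by (rule mult.left_commute)
    also have "\<dots> = prod_list (map \<gamma> (filter (\<lambda>a. a \<noteq> v) (a#R))) * x ^ count_list (a#R) v"
      using True by simp
    finally show ?thesis .
  next
    case False thus ?thesis using Cons by (simp add: mult.assoc)
  qed
qed simp

lemma sum_PiE_insert:
  assumes "v \<notin> V" "finite V" "finite Q"
  shows "(\<Sum>\<gamma>\<in>PiE (insert v V) (\<lambda>_. Q). g \<gamma>) = (\<Sum>\<gamma>\<in>PiE V (\<lambda>_. Q). \<Sum>x\<in>Q. g (\<gamma>(v:=x)))"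
proof -
  have "(\<Sum>\<gamma>\<in>PiE (insert v V) (\<lambda>_. Q). g \<gamma>) = (\<Sum>p\<in>Q \<times> PiE V (\<lambda>_. Q). g ((\<lambda>(y, h). h(v := y)) p))"
    unfolding PiE_insert_eq
    by (subst sum.reindex) (auto intro: inj_combinator[OF assms(1)])
  also have "\<dots> = (\<Sum>x\<in>Q. \<Sum>\<gamma>\<in>PiE V (\<lambda>_. Q). g (\<gamma>(v:=x)))"
    by (simp add: sum.cartesian_product case_prod_unfold)
  also have "\<dots> = (\<Sum>\<gamma>\<in>PiE V (\<lambda>_. Q). \<Sum>x\<in>Q. g (\<gamma>(v:=x)))"
    by (rule sum.swap)
  finally show ?thesis .
qed

lemma key:
  assumes "finite V"
  shows "E \<subseteq> V \<times> V \<Longrightarrow> set R \<subseteq> V \<Longrightarrow>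
    0 \<le> (\<Sum>\<gamma>\<in>PiE V (\<lambda>_. Fc q). prod_list (map \<gamma> R) * CE E \<gamma>)"
  using assms
proof (induction V arbitrary: E R rule: finite_induct)
  case empty
  then show ?case by (simp add: CE_def)
next
  case (insert v V)
  let ?Q = "Fc q"
  have S: "(\<Sum>\<gamma>\<in>PiE (insert v V) (\<lambda>_. ?Q). prod_list (map \<gamma> R) * CE E \<gamma>)
     = (\<Sum>\<gamma>\<in>PiE V (\<lambda>_. ?Q). \<Sum>x\<in>?Q. prod_list (map (\<gamma>(v:=x)) R) * CE E (\<gamma>(v:=x)))"
    by (rule sum_PiE_insert) (use insert finite_Fc in auto)
  show ?case
  proof (cases "\<exists>w. w \<noteq> v \<and> ((v,w) \<in> E \<or> (w,v) \<in> E)")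
    case True
    then obtain w where w: "w \<noteq> v" "(v,w) \<in> E \<or> (w,v) \<in> E" by blast
    have wV: "w \<in> V" using w insert.prems(1) by auto
    define r where "r a = (if a = v then w else a)" for a
    define E' where "E' = (\<lambda>(a,b). (r a, r b)) ` E"
    have E'V: "E' \<subseteq> V \<times> V" using insert.prems(1) wV by (auto simp: E'_def r_def)
    have R'V: "set (map r R) \<subseteq> V" using insert.prems(2) wV by (auto simp: r_def)
    have pt: "(\<Sum>x\<in>?Q. prod_list (map (\<gamma>(v:=x)) R) * CE E (\<gamma>(v:=x)))
        = prod_list (map \<gamma> (map r R)) * CE E' \<gamma>" if g: "\<gamma> \<in> PiE V (\<lambda>_. ?Q)" for \<gamma>
    proof -
      have gw: "\<gamma> w \<in> ?Q" using g wV by auto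
      have z: "prod_list (map (\<gamma>(v:=x)) R) * CE E (\<gamma>(v:=x)) = 0" if "x \<noteq> \<gamma> w" for x
      proof -
        have ne: "(\<gamma>(v:=x)) v \<noteq> (\<gamma>(v:=x)) w" using w that by auto
        have "\<not> (\<forall>(i,j)\<in>E. (\<gamma>(v:=x)) i = (\<gamma>(v:=x)) j)"
        proof
          assume h: "\<forall>(i,j)\<in>E. (\<gamma>(v:=x)) i = (\<gamma>(v:=x)) j"
          from w(2) show False
          proof
            assume "(v,w) \<in> E" from bspec[OF h this] ne show False by simp
          next
            assume "(w,v) \<in> E" from bspec[OF h this] ne show False by simp
          qed
        qed
        thus ?thesis by (simp only: CE_def if_False mult_zero_right)
      qed
      have "(\<Sum>x\<in>?Q. prod_list (map (\<gamma>(v:=x)) R) * CE E (\<gamma>(v:=x)))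
          = prod_list (map (\<gamma>(v:=\<gamma> w)) R) * CE E (\<gamma>(v:=\<gamma> w))"
      proof -
        have "(\<Sum>x\<in>?Q-{\<gamma> w}. prod_list (map (\<gamma>(v:=x)) R) * CE E (\<gamma>(v:=x))) = 0"
          by (rule sum.neutral) (use z in blast)
        thus ?thesis using finite_Fc gw by (subst sum.remove[of _ "\<gamma> w"]) auto
      qed
      also have "\<gamma>(v:=\<gamma> w) = \<gamma> \<circ> r" by (auto simp: r_def)
      also have "CE E (\<gamma> \<circ> r) = CE E' \<gamma>" by (auto simp: CE_def E'_def case_prod_beta)
      finally show ?thesis by (simp only: map_map)
    qed
    have "0 \<le> (\<Sum>\<gamma>\<in>PiE V (\<lambda>_. ?Q). prod_list (map \<gamma> (map r R)) * CE E' \<gamma>)"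
      by (rule insert.IH[OF E'V R'V])
    also have "\<dots> = (\<Sum>\<gamma>\<in>PiE V (\<lambda>_. ?Q). \<Sum>x\<in>?Q. prod_list (map (\<gamma>(v:=x)) R) * CE E (\<gamma>(v:=x)))"
      using pt by (intro sum.cong) auto
    finally show ?thesis unfolding S .
  next
    case False
    define E' where "E' = E - {(v,v)}"
    define R' where "R' = filter (\<lambda>a. a \<noteq> v) R"
    have E'V: "E' \<subseteq> V \<times> V" using insert.prems(1) False by (auto simp: E'_def)
    have R'V: "set R' \<subseteq> V" using insert.prems(2) by (auto simp: R'_def)
    have pt: "(\<Sum>x\<in>?Q. prod_list (map (\<gamma>(v:=x)) R) * CE E (\<gamma>(v:=x)))
        = prod_list (map \<gamma> R') * CE E' \<gamma> * (\<Sum>x\<in>?Q. x ^ count_list R v)" for \<gamma>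
    proof -
      have eq: "CE E (\<gamma>(v:=x)) = CE E' \<gamma>" for x
      proof -
        have "(\<forall>(i,j)\<in>E. (\<gamma>(v:=x)) i = (\<gamma>(v:=x)) j) \<longleftrightarrow> (\<forall>(i,j)\<in>E'. \<gamma> i = \<gamma> j)"
        proof (intro iffI ballI)
          fix p assume h: "\<forall>(i,j)\<in>E. (\<gamma>(v:=x)) i = (\<gamma>(v:=x)) j" and p: "p \<in> E'"
          obtain i j where ij: "p = (i,j)" by (cases p)
          have "(i,j) \<in> E" "(i,j) \<noteq> (v,v)" using p ij by (auto simp: E'_def)
          moreover have "i \<noteq> v" "j \<noteq> v" using calculation False by auto
          ultimately show "case p of (i,j) \<Rightarrow> \<gamma> i = \<gamma> j" using h ij by auto
        next
          fix p assume h: "\<forall>(i,j)\<in>E'. \<gamma> i = \<gamma> j" and p: "p \<in> E"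
          obtain i j where ij: "p = (i,j)" by (cases p)
          show "case p of (i,j) \<Rightarrow> (\<gamma>(v:=x)) i = (\<gamma>(v:=x)) j"
          proof (cases "(i,j) = (v,v)")
            case True thus ?thesis using ij by simp
          next
            case ne: False
            hence "i \<noteq> v" "j \<noteq> v" using p ij False by auto
            moreover have "(i,j) \<in> E'" using p ij ne by (auto simp: E'_def)
            ultimately show ?thesis using h ij by auto
          qed
        qed
        thus ?thesis unfolding CE_def by (simp only:)
      qed
      have "(\<Sum>x\<in>?Q. prod_list (map (\<gamma>(v:=x)) R) * CE E (\<gamma>(v:=x)))
          = (\<Sum>x\<in>?Q. (prod_list (map \<gamma> R') * CE E' \<gamma>) * x ^ count_list R v)"
        by (intro sum.cong refl) (simp only: eq prod_list_upd R'_def mult_ac)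
      thus ?thesis by (simp only: sum_distrib_left)
    qed
    have "0 \<le> (\<Sum>\<gamma>\<in>PiE V (\<lambda>_. ?Q). prod_list (map \<gamma> R') * CE E' \<gamma>) * (\<Sum>x\<in>?Q. x ^ count_list R v)"
      by (intro mult_nonneg_nonneg insert.IH[OF E'V R'V] sum_pow_Fc_nonneg)
    also have "\<dots> = (\<Sum>\<gamma>\<in>PiE V (\<lambda>_. ?Q). \<Sum>x\<in>?Q. prod_list (map (\<gamma>(v:=x)) R) * CE E (\<gamma>(v:=x)))"
      unfolding sum_distrib_right by (simp only: pt)
    finally show ?thesis unfolding S .
  qed
qed

lemma if_mult: "(if P then (1::real) else 0) * (if Q then 1 else 0) = (if P \<and> Q then 1 else 0)"
  by simp

lemma prod_delta:
  assumes "finite S"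
  shows "(\<Prod>A\<in>S. delta A \<gamma>) = CE (\<Union>A\<in>S. A \<times> A) \<gamma>"
  using assms
proof (induction S rule: finite_induct)
  case empty then show ?case by (simp add: CE_def)
next
  case (insert A S)
  have "(\<Prod>B\<in>insert A S. delta B \<gamma>) = delta A \<gamma> * CE (\<Union>B\<in>S. B \<times> B) \<gamma>"
    using insert by simp
  also have "\<dots> = CE (\<Union>B\<in>insert A S. B \<times> B) \<gamma>"
  proof -
    let ?X = "\<Union>B\<in>S. B \<times> B"
    have e: "(\<Union>B\<in>insert A S. B \<times> B) = A \<times> A \<union> ?X" by simp
    have "(\<forall>(i,j)\<in>A \<times> A \<union> ?X. \<gamma> i = \<gamma> j) \<longleftrightarrow>
          (\<forall>i\<in>A. \<forall>j\<in>A. \<gamma> i = \<gamma> j) \<and> (\<forall>(i,j)\<in>?X. \<gamma> i = \<gamma> j)"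
      by blast
    hence "CE (A \<times> A \<union> ?X) \<gamma> = (if (\<forall>i\<in>A. \<forall>j\<in>A. \<gamma> i = \<gamma> j) \<and> (\<forall>(i,j)\<in>?X. \<gamma> i = \<gamma> j) then 1 else 0)"
      unfolding CE_def by (simp only:)
    thus ?thesis unfolding e delta_def CE_def if_mult by (simp only:)
  qed
  finally show ?case .
qed

lemma exp_delta: "exp (J * delta A \<gamma>) = 1 + (exp J - 1) * delta A \<gamma>"
  by (simp add: delta_def)

theorem theorem1:
  fixes q n :: nat and J :: "nat set \<Rightarrow> real" and R :: "nat list"
  assumes "q \<ge> 2" and "n \<ge> 1"
    and "\<And>A. A \<in> interactions n \<Longrightarrow> J A \<ge> 0"
    and "set R \<subseteq> {1..n}"
  shows "expect q n J R \<ge> 0"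
proof -
  let ?I = "interactions n"
  let ?c = "\<lambda>A. exp (J A) - 1"
  let ?E = "\<lambda>S. \<Union>A\<in>S. A \<times> A"
  have finI: "finite ?I"
    by (rule finite_subset[of _ "Pow {1..n}"]) (auto simp: interactions_def)
  have fin\<Omega>: "finite (Omega q n)" unfolding Omega_def by (intro finite_PiE finite_Fc) simp
  have w: "weight n J \<gamma> = (\<Sum>S\<in>Pow ?I. (\<Prod>A\<in>S. ?c A) * CE (?E S) \<gamma>)" for \<gamma>
  proof -
    have "weight n J \<gamma> = (\<Prod>A\<in>?I. exp (J A * delta A \<gamma>))"
      unfolding weight_def hamiltonian_def using finI by (simp add: exp_sum)
    also have "\<dots> = (\<Prod>A\<in>?I. ?c A * delta A \<gamma> + 1)"
      by (simp add: exp_delta add.commute)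
    also have "\<dots> = (\<Sum>S\<in>Pow ?I. (\<Prod>A\<in>S. ?c A * delta A \<gamma>) * (\<Prod>A\<in>?I-S. 1))"
      by (rule prod_add[OF finI])
    also have "\<dots> = (\<Sum>S\<in>Pow ?I. (\<Prod>A\<in>S. ?c A) * CE (?E S) \<gamma>)"
    proof (intro sum.cong refl)
      fix S assume "S \<in> Pow ?I"
      hence "finite S" using finI by (auto intro: finite_subset)
      thus "(\<Prod>A\<in>S. ?c A * delta A \<gamma>) * (\<Prod>A\<in>?I-S. 1) = (\<Prod>A\<in>S. ?c A) * CE (?E S) \<gamma>"
        by (simp add: prod.distrib prod_delta)
    qed
    finally show ?thesis .
  qed
  have num: "0 \<le> (\<Sum>\<gamma>\<in>Omega q n. spin_prod R \<gamma> * weight n J \<gamma>)"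
  proof -
    have "(\<Sum>\<gamma>\<in>Omega q n. spin_prod R \<gamma> * weight n J \<gamma>)
       = (\<Sum>S\<in>Pow ?I. (\<Prod>A\<in>S. ?c A) * (\<Sum>\<gamma>\<in>Omega q n. prod_list (map \<gamma> R) * CE (?E S) \<gamma>))"
      unfolding w spin_prod_def sum_distrib_left sum_distrib_right
      by (subst sum.swap) (simp add: mult_ac)
    also have "0 \<le> \<dots>"
    proof (rule sum_nonneg, rule mult_nonneg_nonneg)
      fix S assume S: "S \<in> Pow ?I"
      show "0 \<le> (\<Prod>A\<in>S. ?c A)"
      proof (rule prod_nonneg)
        fix A assume "A \<in> S"
        hence "A \<in> ?I" using S by auto
        hence "J A \<ge> 0" by (rule assms(3))
        thus "0 \<le> ?c A" by simp
      qed
      have "?E S \<subseteq> {1..n} \<times> {1..n}" using S by (auto simp: interactions_def)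
      thus "0 \<le> (\<Sum>\<gamma>\<in>Omega q n. prod_list (map \<gamma> R) * CE (?E S) \<gamma>)"
        unfolding Omega_def by (intro key assms(4)) simp
    qed
    finally show ?thesis .
  qed
  have Z: "0 \<le> partition_fn q n J"
    unfolding partition_fn_def weight_def by (intro sum_nonneg) simp
  have "expect q n J R = (\<Sum>\<gamma>\<in>Omega q n. spin_prod R \<gamma> * weight n J \<gamma>) / partition_fn q n J"
    unfolding expect_def prob_def by (simp add: sum_divide_distrib)
  also have "0 \<le> \<dots>" using num Z by simp
  finally show ?thesis .
qed

end
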